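(* Let $\mu,P$ be Borel probability measures on $\mathbb{R}^d$ absolutely continuous w.r.t. Lebesgue measure, let $u\in\mathbb{R}^d$, let $v_u\in\arg\min_{v\in\mathcal{S}^{d-1}}\mu(\{y:\langle y-u,v\rangle\geq0\})$, and for $k\in\mathbb{N}$ let $Q_k$ be the uniform (Lebesgue) distribution on the ball $kv_u+\mathbb{B}$. Then for every $\varepsilon\in(0,1)$ with $\varepsilon>\mathrm{TD}(u;\mu)>0$, if for each $k$, $\partial\varphi_{\varepsilon,k}$ is the subdifferential of any lower semicontinuous convex function $\varphi_{\varepsilon,k}$ whose gradient pushes $\mu$ forward to $P+\varepsilon(Q_k-P)$, then $$\inf_{y\in\partial\varphi_{\varepsilon,k}(u)}\|y\|\to+\infty\quad\text{as }k\to\infty.$$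
   Context: $\mathbb{B}=\{x:\|x\|\leq1\}$; $\mathrm{TD}(u;\mu)=\min_{v\in\mathcal{S}^{d-1}}\mu(\{z:\langle v,z-u\rangle\geq0\})$; $\partial\psi(u)=\{x:\psi(z)\geq\psi(u)+\langle x,z-u\rangle\ \forall z\}$. *)

theory Defs
  imports "HOL-Probability.Probability"
begin

definition tukey_depth :: "'a::euclidean_space \<Rightarrow> 'a measure \<Rightarrow> real" where
  "tukey_depth u \<mu> = (INF v \<in> {v. norm v = 1}. measure \<mu> {z. v \<bullet> (z - u) \<ge> 0})"

definition ereal_convex :: "('a::real_vector \<Rightarrow> ereal) \<Rightarrow> bool" where
  "ereal_convex f \<longleftrightarrow> (\<forall>x y t. 0 \<le> t \<and> t \<le> 1 \<longrightarrow>
      f ((1 - t) *\<^sub>R x + t *\<^sub>R y) \<le> ereal (1 - t) * f x + ereal t * f y)"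

definition ereal_lsc :: "('a::topological_space \<Rightarrow> ereal) \<Rightarrow> bool" where
  "ereal_lsc f \<longleftrightarrow> (\<forall>x. \<forall>c < f x. eventually (\<lambda>y. c < f y) (at x))"

definition subdiff :: "('a::real_inner \<Rightarrow> ereal) \<Rightarrow> 'a \<Rightarrow> 'a set" where
  "subdiff f u = {x. \<forall>z. f z \<ge> f u + ereal (x \<bullet> (z - u))}"

definition is_gradient_at :: "('a::real_inner \<Rightarrow> ereal) \<Rightarrow> 'a \<Rightarrow> 'a \<Rightarrow> bool" where
  "is_gradient_at f g x \<longleftrightarrow> (\<forall>\<^sub>F y in nhds x. f y \<noteq> \<infinity> \<and> f y \<noteq> -\<infinity>) \<and>
      ((\<lambda>y. real_of_ereal (f y)) has_derivative (\<lambda>h. g \<bullet> h)) (at x)"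

text \<open>The mixture P + eps (Q - P) = (1 - eps) P + eps Q on the sigma-algebra of P.\<close>
definition mixture :: "real \<Rightarrow> 'a measure \<Rightarrow> 'a measure \<Rightarrow> 'a measure" where
  "mixture \<epsilon> P Q = measure_of (space P) (sets P)
     (\<lambda>A. ennreal (1 - \<epsilon>) * emeasure P A + ennreal \<epsilon> * emeasure Q A)"

end

theory Submission
  imports Defs
begin

lemma mono_grad:
  fixes f :: "'a::euclidean_space \<Rightarrow> ereal"
  assumes cv: "ereal_convex f" and ninf: "\<And>x. f x \<noteq> -\<infinity>"
    and y: "y \<in> subdiff f u" and gr: "is_gradient_at f g x"
  shows "(g - y) \<bullet> (x - u) \<ge> 0"
proof -
  define F where "F = (\<lambda>z. real_of_ereal (f z))"
  from gr have ev: "\<forall>\<^sub>F z in nhds x. f z \<noteq> \<infinity> \<and> f z \<noteq> -\<infinity>"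
    and D: "(F has_derivative (\<lambda>h. g \<bullet> h)) (at x)"
    unfolding is_gradient_at_def F_def by auto
  have fx: "f x = ereal (F x)" using eventually_nhds_x_imp_x[OF ev] unfolding F_def
    by (cases "f x") auto
  from y have sd: "\<And>z. f z \<ge> f u + ereal (y \<bullet> (z - u))" unfolding subdiff_def by auto
  have "f u \<noteq> \<infinity>" using sd[of x] fx by auto
  hence fu: "f u = ereal (F u)" using ninf[of u] unfolding F_def by (cases "f u") auto
  have sdx: "F x \<ge> F u + y \<bullet> (x - u)" using sd[of x] fx fu by simp
  define w where "w = u - x"
  have cvx: "F (x + t *\<^sub>R w) \<le> (1 - t) * F x + t * F u" if "0 \<le> t" "t \<le> 1" for t
  proof -
    have e: "(1 - t) *\<^sub>R x + t *\<^sub>R u = x + t *\<^sub>R w" unfolding w_def by (simp add: algebra_simps)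
    have "f (x + t *\<^sub>R w) \<le> ereal (1 - t) * f x + ereal t * f u"
      using cv that unfolding ereal_convex_def e[symmetric] by blast
    also have "\<dots> = ereal ((1 - t) * F x + t * F u)" using fx fu by simp
    finally have le: "f (x + t *\<^sub>R w) \<le> ereal ((1 - t) * F x + t * F u)" .
    have "f (x + t *\<^sub>R w) \<noteq> \<infinity>" using le by auto
    with ninf[of "x + t *\<^sub>R w"] have "f (x + t *\<^sub>R w) = ereal (F (x + t *\<^sub>R w))"
      unfolding F_def by (cases "f (x + t *\<^sub>R w)") auto
    with le show ?thesis by simp
  qed
  have D2: "((\<lambda>t. F (x + t *\<^sub>R w)) has_derivative (\<lambda>h. g \<bullet> (h *\<^sub>R w))) (at 0)"
  proof -
    have l: "((\<lambda>t::real. x + t *\<^sub>R w) has_derivative (\<lambda>h. h *\<^sub>R w)) (at 0)"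
      by (auto intro!: derivative_eq_intros)
    have "((\<lambda>t::real. x + t *\<^sub>R w) has_derivative (\<lambda>h. h *\<^sub>R w)) (at 0 within UNIV)" using l by simp
    from diff_chain_at[OF l, of F "\<lambda>h. g \<bullet> h"] D show ?thesis by (simp add: o_def)
  qed
  hence "((\<lambda>t. F (x + t *\<^sub>R w)) has_field_derivative (g \<bullet> w)) (at 0)"
  proof -
    have "(\<lambda>h. g \<bullet> (h *\<^sub>R w)) = (*) (g \<bullet> w)" by (auto simp: inner_scaleR_right)
    with D2 show ?thesis by (simp add: has_field_derivative_def)
  qed
  hence lim: "((\<lambda>t. (F (x + t *\<^sub>R w) - F x) / t) \<longlongrightarrow> g \<bullet> w) (at 0)"
    unfolding has_field_derivative_iff by simp
  hence lim2: "((\<lambda>t. (F (x + t *\<^sub>R w) - F x) / t) \<longlongrightarrow> g \<bullet> w) (at_right 0)"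
    by (rule filterlim_mono) (simp_all add: at_le)
  have evr: "\<forall>\<^sub>F t in at_right (0::real). (F (x + t *\<^sub>R w) - F x) / t \<le> F u - F x"
  proof -
    have "\<forall>\<^sub>F t in at_right (0::real). 0 < t \<and> t < 1"
      by (simp add: eventually_at_right_field) (meson zero_less_one)
    thus ?thesis
    proof (rule eventually_mono)
      fix t :: real assume t: "0 < t \<and> t < 1"
      have "F (x + t *\<^sub>R w) - F x \<le> t * (F u - F x)" using cvx[of t] t by (simp add: algebra_simps)
      thus "(F (x + t *\<^sub>R w) - F x) / t \<le> F u - F x" using t by (simp add: divide_simps mult.commute)
    qed
  qed
  have "g \<bullet> w \<le> F u - F x"
    using tendsto_upperbound[OF lim2 evr] by simp
  with sdx have "g \<bullet> w \<le> y \<bullet> w" unfolding w_def by (simp add: inner_diff_right)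
  thus ?thesis unfolding w_def by (simp add: inner_diff_left inner_diff_right)
qed

lemma mixture_emeasure:
  assumes sQ: "sets Q = sets P" and A: "A \<in> sets P"
  shows "emeasure (mixture e P Q) A = ennreal (1 - e) * emeasure P A + ennreal e * emeasure Q A"
  unfolding mixture_def
proof (rule emeasure_measure_of_sigma)
  show "sigma_algebra (space P) (sets P)" by (rule sets.sigma_algebra_axioms)
  show "positive (sets P) (\<lambda>A. ennreal (1 - e) * emeasure P A + ennreal e * emeasure Q A)"
    by (simp add: positive_def)
  show "countably_additive (sets P) (\<lambda>A. ennreal (1 - e) * emeasure P A + ennreal e * emeasure Q A)"
    unfolding countably_additive_def
  proof (intro allI impI)
    fix B :: "nat \<Rightarrow> _" assume B: "range B \<subseteq> sets P" "disjoint_family B" "\<Union> (range B) \<in> sets P"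
    have BQ: "range B \<subseteq> sets Q" using B sQ by simp
    have "(\<Sum>i. ennreal (1 - e) * emeasure P (B i) + ennreal e * emeasure Q (B i))
        = (\<Sum>i. ennreal (1 - e) * emeasure P (B i)) + (\<Sum>i. ennreal e * emeasure Q (B i))"
      by (rule suminf_add[symmetric]) auto
    also have "\<dots> = ennreal (1 - e) * (\<Sum>i. emeasure P (B i)) + ennreal e * (\<Sum>i. emeasure Q (B i))"
      by (simp add: ennreal_suminf_cmult)
    also have "\<dots> = ennreal (1 - e) * emeasure P (\<Union> (range B)) + ennreal e * emeasure Q (\<Union> (range B))"
      using suminf_emeasure[OF B(1,2)] suminf_emeasure[OF BQ B(2)] by simp
    finally show "(\<Sum>i. ennreal (1 - e) * emeasure P (B i) + ennreal e * emeasure Q (B i))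
        = ennreal (1 - e) * emeasure P (\<Union> (range B)) + ennreal e * emeasure Q (\<Union> (range B))" .
  qed
qed (rule A)


lemma cball_unif:
  fixes c :: "'a::euclidean_space"
  shows "emeasure (uniform_measure lborel (cball c 1)) (cball c 1) = 1"
proof (rule emeasure_uniform_measure_1)
  show "emeasure lborel (cball c 1) \<noteq> \<infinity>" using emeasure_lborel_cball_finite[of c 1] by simp
  have "unit_ball_vol (real DIM('a)) > 0" by (rule unit_ball_vol_pos) simp
  thus "emeasure lborel (cball c 1) \<noteq> 0" using emeasure_cball[of 1 c] by (simp del: unit_ball_vol_pos)
qed

lemma AE_witness:
  assumes "AE x in M. P x" "emeasure M A \<noteq> 0" "A \<in> sets M"
  shows "\<exists>x\<in>A. P x"
proof (rule ccontr)
  assume "\<not> (\<exists>x\<in>A. P x)"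
  from assms(1) obtain N where N: "{x \<in> space M. \<not> P x} \<subseteq> N" "emeasure M N = 0" "N \<in> sets M"
    by (rule AE_E)
  have "A \<subseteq> N" using N(1) sets.sets_into_space[OF assms(3)] \<open>\<not> (\<exists>x\<in>A. P x)\<close> by blast
  hence "emeasure M A \<le> emeasure M N" by (rule emeasure_mono) (rule N(3))
  with N(2) assms(2) show False by simp
qed

lemma cone_small:
  fixes M :: "'a::euclidean_space measure"
  assumes sM: "sets M = sets borel" and fm: "finite_measure M"
    and H: "measure M {y. (y - u) \<bullet> v \<ge> 0} < e"
  shows "\<exists>c>0. measure M {x. (x - u) \<bullet> v \<ge> - c * norm (x - u)} < e"
proof -
  interpret finite_measure M by (rule fm)
  define C where "C = (\<lambda>n::nat. {x. (x - u) \<bullet> v \<ge> - (1 / real (Suc n)) * norm (x - u)})"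
  have Cs: "C n \<in> sets M" for n
  proof -
    have "closed (C n)" unfolding C_def
      by (rule closed_Collect_le) (auto intro!: continuous_intros)
    thus ?thesis using sM by simp
  qed
  have dec: "decseq C"
  proof (rule decseq_SucI)
    fix n
    show "C (Suc n) \<subseteq> C n"
    proof
      fix x assume "x \<in> C (Suc n)"
      hence "(x - u) \<bullet> v \<ge> - (1 / real (Suc (Suc n))) * norm (x - u)" unfolding C_def by simp
      moreover have "(1 / real (Suc (Suc n))) * norm (x - u) \<le> (1 / real (Suc n)) * norm (x - u)"
        by (intro mult_right_mono) (auto simp: divide_simps)
      ultimately show "x \<in> C n" unfolding C_def by simp
    qed
  qed
  have inter: "(\<Inter>n. C n) = {y. (y - u) \<bullet> v \<ge> 0}"
  proof (intro equalityI subsetI)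
    fix x assume x: "x \<in> (\<Inter>n. C n)"
    show "x \<in> {y. (y - u) \<bullet> v \<ge> 0}"
    proof (rule ccontr)
      assume "x \<notin> {y. (y - u) \<bullet> v \<ge> 0}"
      hence a: "(x - u) \<bullet> v < 0" by simp
      obtain n :: nat where n: "norm (x - u) / (- ((x - u) \<bullet> v)) < real n" using reals_Archimedean2 by blast
      have "norm (x - u) < real n * (- ((x - u) \<bullet> v))" using n a by (simp add: divide_simps)
      also have "\<dots> \<le> real (Suc n) * (- ((x - u) \<bullet> v))" using a by (intro mult_right_mono) auto
      finally have "norm (x - u) / real (Suc n) < - ((x - u) \<bullet> v)" by (simp add: divide_simps mult.commute)
      moreover from x have "x \<in> C n" by blast
      ultimately show False unfolding C_def by simp
    qed
  next
    fix x assume "x \<in> {y. (y - u) \<bullet> v \<ge> 0}"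
    thus "x \<in> (\<Inter>n. C n)" unfolding C_def by (auto intro: order_trans[rotated])
  qed
  have lim: "(\<lambda>n. measure M (C n)) \<longlonglongrightarrow> measure M {y. (y - u) \<bullet> v \<ge> 0}"
    using Lim_measure_decseq[of C M] Cs dec inter by (auto simp: emeasure_eq_measure)
  from order_tendstoD(2)[OF lim H] obtain n where "measure M (C n) < e"
    by (auto simp: eventually_sequentially)
  thus ?thesis unfolding C_def by (intro exI[of _ "1 / real (Suc n)"]) auto
qed

theorem mainTheorem7:
  fixes \<mu> P :: "'a::euclidean_space measure"
    and u v :: 'a
    and \<epsilon> :: real
    and \<phi> :: "nat \<Rightarrow> 'a \<Rightarrow> ereal"
    and g :: "nat \<Rightarrow> 'a \<Rightarrow> 'a"
  assumes "sets \<mu> = sets borel" and "prob_space \<mu>" and "absolutely_continuous lborel \<mu>"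
    and "sets P = sets borel" and "prob_space P" and "absolutely_continuous lborel P"
    and "norm v = 1"
    and "measure \<mu> {y. (y - u) \<bullet> v \<ge> 0} = tukey_depth u \<mu>"
    and "0 < \<epsilon>" and "\<epsilon> < 1" and "tukey_depth u \<mu> < \<epsilon>" and "0 < tukey_depth u \<mu>"
    and "\<And>k. ereal_convex (\<phi> k)" and "\<And>k. ereal_lsc (\<phi> k)"
    and "\<And>k x. \<phi> k x \<noteq> -\<infinity>"
    and "\<And>k. AE x in \<mu>. is_gradient_at (\<phi> k) (g k x) x"
    and "\<And>k. g k \<in> borel_measurable \<mu>"
    and "\<And>k. distr \<mu> borel (g k) =
           mixture \<epsilon> P (uniform_measure lborel (cball (real k *\<^sub>R v) 1))"
  shows "((\<lambda>k. INF y \<in> subdiff (\<phi> k) u. ereal (norm y)) \<longlongrightarrow> \<infinity>) sequentially"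
proof -
  note A = assms
  interpret prob_space \<mu> by (rule A(2))
  have sm: "sets \<mu> = sets borel" by (rule A(1))
  obtain c where c: "c > 0" and cm: "measure \<mu> {x. (x - u) \<bullet> v \<ge> - c * norm (x - u)} < \<epsilon>"
    using cone_small[OF sm finite_measure_axioms, of u v \<epsilon>] A(8,11) by auto
  define C where "C = {x. (x - u) \<bullet> v \<ge> - c * norm (x - u)}"
  have Cs: "C \<in> sets \<mu>"
  proof -
    have "closed C" unfolding C_def
      by (rule closed_Collect_le) (auto intro!: continuous_intros)
    thus ?thesis using sm by simp
  qed
  have key: "norm y \<ge> real k * c - 1" if y: "y \<in> subdiff (\<phi> k) u" for k y
  proof -
    define B where "B = cball (real k *\<^sub>R v) 1"
    define S where "S = g k -` B \<inter> space \<mu>"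
    have Bs: "B \<in> sets borel" unfolding B_def by simp
    have Ss: "S \<in> sets \<mu>" unfolding S_def using measurable_sets[OF A(17) Bs] .
    have "emeasure \<mu> S = emeasure (distr \<mu> borel (g k)) B"
      unfolding S_def by (rule emeasure_distr[symmetric, OF A(17) Bs])
    also have "\<dots> = ennreal (1 - \<epsilon>) * emeasure P B + ennreal \<epsilon> * emeasure (uniform_measure lborel B) B"
      unfolding A(18) B_def by (rule mixture_emeasure) (simp_all add: A(4))
    also have "\<dots> = ennreal (1 - \<epsilon>) * emeasure P B + ennreal \<epsilon>"
      unfolding B_def cball_unif by simp
    finally have "emeasure \<mu> S \<ge> ennreal \<epsilon>" by simp
    hence mS: "measure \<mu> S \<ge> \<epsilon>" using A(9) by (simp add: emeasure_eq_measure)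
    have "measure \<mu> (S - C) = measure \<mu> S - measure \<mu> (S \<inter> C)"
      by (rule finite_measure_Diff'[OF Ss Cs])
    moreover have "measure \<mu> (S \<inter> C) \<le> measure \<mu> C"
      by (rule finite_measure_mono) (auto simp: Cs)
    ultimately have "measure \<mu> (S - C) > 0" using mS cm unfolding C_def by simp
    hence "emeasure \<mu> (S - C) \<noteq> 0" by (simp add: emeasure_eq_measure)
    from AE_witness[OF A(16)[of k] this] Ss Cs obtain x where
      xS: "x \<in> S" and xC: "x \<notin> C" and gx: "is_gradient_at (\<phi> k) (g k x) x" by blast
    have m: "(g k x - y) \<bullet> (x - u) \<ge> 0" by (rule mono_grad[OF A(13) A(15) y gx])
    have gb: "norm (g k x - real k *\<^sub>R v) \<le> 1" using xS unfolding S_def B_def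
      by (simp add: dist_norm norm_minus_commute)
    define r where "r = norm (x - u)"
    define a where "a = (x - u) \<bullet> v"
    have xc: "a < - c * r" using xC unfolding C_def a_def r_def by simp
    have rpos: "r > 0"
    proof (rule ccontr)
      assume "\<not> r > 0" hence "x - u = 0" unfolding r_def by simp
      hence "a = 0" "r = 0" unfolding a_def r_def by auto
      with xc show False by simp
    qed
    have "y \<bullet> (x - u) \<le> g k x \<bullet> (x - u)" using m by (simp add: inner_diff_left)
    also have "g k x \<bullet> (x - u) = real k * a + (g k x - real k *\<^sub>R v) \<bullet> (x - u)"
    proof -
      have e: "g k x \<bullet> (x - u) = (real k *\<^sub>R v + (g k x - real k *\<^sub>R v)) \<bullet> (x - u)" by simp
      have "a = v \<bullet> (x - u)" unfolding a_def by (rule inner_commute)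
      with e show ?thesis by (simp only: inner_add_left inner_scaleR_left)
    qed
    also have "(g k x - real k *\<^sub>R v) \<bullet> (x - u) \<le> r"
    proof -
      have "norm (g k x - real k *\<^sub>R v) * norm (x - u) \<le> 1 * norm (x - u)"
        by (rule mult_right_mono) (use gb in auto)
      thus ?thesis using Cauchy_Schwarz_ineq2[of "g k x - real k *\<^sub>R v" "x - u"] unfolding r_def by linarith
    qed
    also have "real k * a \<le> real k * (- c * r)" using xc by (intro mult_left_mono) auto
    finally have 1: "y \<bullet> (x - u) \<le> real k * (- c * r) + r" by simp
    have 2: "- (norm y * r) \<le> y \<bullet> (x - u)"
      using Cauchy_Schwarz_ineq2[of y "x - u"] unfolding r_def by simp
    from 1 2 have "(real k * c - 1) * r \<le> norm y * r" by (simp add: algebra_simps)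
    thus ?thesis using rpos by simp
  qed
  show ?thesis unfolding tendsto_PInfty
  proof
    fix r :: real
    obtain N :: nat where N: "(r + 2) / c < real N" using reals_Archimedean2 by blast
    show "\<forall>\<^sub>F k in sequentially. ereal r < (INF y \<in> subdiff (\<phi> k) u. ereal (norm y))"
      unfolding eventually_sequentially
    proof (intro exI allI impI)
      fix k assume "N \<le> k"
      hence "(r + 2) / c < real k" using N by linarith
      hence rk: "r + 2 < real k * c" using c by (simp add: divide_simps)
      have "ereal r < ereal (real k * c - 1)" using rk by simp
      also have "\<dots> \<le> (INF y \<in> subdiff (\<phi> k) u. ereal (norm y))"
        by (rule INF_greatest) (use key in simp)
      finally show "ereal r < (INF y \<in> subdiff (\<phi> k) u. ereal (norm y))" .
    qed
  qed
qed

end
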